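(* If $G$ and $H$ are almost-3-symmetric graphs, each with at least 3 vertices, then $\mathrm{Inflate}(G,H)$ is almost-3-symmetric.
   Context: All graphs are finite and simple. For a graph $G$ on $n$ vertices and a graph $F$ on $k$ vertices, the density $t(F,G)$ is the number of $k$-element subsets $S\subseteq V(G)$ whose induced subgraph is isomorphic to $F$, divided by $\binom{n}{k}$. $K_2$ is the single edge, $K_3$ the triangle, $P_3$ the path with 3 vertices and 2 edges, $K_2\cup K_1$ the 3-vertex graph with exactly one edge, and $\overline{K_3}$ the 3-vertex graph with no edges. A graph $G$ with at least 3 vertices is almost-3-symmetric if $t(K_2,G)=1/2$, $t(K_3,G)=t(\overline{K_3},G)$, and $t(P_3,G)=t(K_2\cup K_1,G)$. The inflation $\mathrm{Inflate}(G,H)$ (lexicographic product) is the graph with vertex set $V(G)\times V(H)$ in which $(g,h)$ and $(g',h')$ are adjacent iff either $g$ and $g'$ are adjacent in $G$, or $g=g'$ and $h,h'$ are adjacent in $H$. *)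

theory Defs
  imports Complex_Main
begin

type_synonym 'a graph = "'a set \<times> 'a set set"

definition verts :: "'a graph \<Rightarrow> 'a set" where "verts G = fst G"
definition edges :: "'a graph \<Rightarrow> 'a set set" where "edges G = snd G"

definition simple_graph :: "'a graph \<Rightarrow> bool" where
  "simple_graph G \<longleftrightarrow> finite (verts G) \<and>
     (\<forall>e\<in>edges G. e \<subseteq> verts G \<and> card e = 2)"

definition adj :: "'a graph \<Rightarrow> 'a \<Rightarrow> 'a \<Rightarrow> bool" where
  "adj G u v \<longleftrightarrow> {u, v} \<in> edges G"

definition induced_iso :: "'a graph \<Rightarrow> 'a set \<Rightarrow> 'b graph \<Rightarrow> bool" where
  "induced_iso G S F \<longleftrightarrow> (\<exists>f. bij_betw f S (verts F) \<and>
     (\<forall>u\<in>S. \<forall>v\<in>S. adj G u v \<longleftrightarrow> adj F (f u) (f v)))"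

definition density :: "'b graph \<Rightarrow> 'a graph \<Rightarrow> real" where
  "density F G = real (card {S. S \<subseteq> verts G \<and> card S = card (verts F) \<and> induced_iso G S F})
                 / real (card (verts G) choose card (verts F))"

definition K2 :: "nat graph" where "K2 = ({0,1}, {{0,1}})"
definition K3 :: "nat graph" where "K3 = ({0,1,2}, {{0,1},{0,2},{1,2}})"
definition P3 :: "nat graph" where "P3 = ({0,1,2}, {{0,1},{1,2}})"
definition K2_K1 :: "nat graph" where "K2_K1 = ({0,1,2}, {{0,1}})"
definition coK3 :: "nat graph" where "coK3 = ({0,1,2}, {})"

definition almost_3_symmetric :: "'a graph \<Rightarrow> bool" where
  "almost_3_symmetric G \<longleftrightarrow> card (verts G) \<ge> 3 \<and>
     density K2 G = 1/2 \<and> density K3 G = density coK3 G \<and> density P3 G = density K2_K1 G"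

definition inflate :: "'a graph \<Rightarrow> 'b graph \<Rightarrow> ('a \<times> 'b) graph" where
  "inflate G H = (verts G \<times> verts H,
     {{(g,h),(g',h')} | g h g' h'. g \<in> verts G \<and> g' \<in> verts G \<and> h \<in> verts H \<and> h' \<in> verts H \<and>
        (adj G g g' \<or> (g = g' \<and> adj H h h'))})"

end

theory Submission imports Defs begin

definition S2 :: "('a\<Rightarrow>'a\<Rightarrow>real) \<Rightarrow> 'a set \<Rightarrow> real" where
  "S2 X V = (\<Sum>x\<in>V. \<Sum>y\<in>V. X x y)"
definition S3 :: "('a\<Rightarrow>'a\<Rightarrow>real) \<Rightarrow> ('a\<Rightarrow>'a\<Rightarrow>real) \<Rightarrow> ('a\<Rightarrow>'a\<Rightarrow>real) \<Rightarrow> 'a set \<Rightarrow> real" where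
  "S3 X Y Z V = (\<Sum>x\<in>V. \<Sum>y\<in>V. \<Sum>z\<in>V. X x y * Y y z * Z x z)"

lemma inner_H:
  fixes a1 a2 a3 d1 d2 d3 :: real
  assumes "d1*d2*a3 = 0" "d1*d3*a2 = 0" "d2*d3*a1 = 0"
  shows "(\<Sum>h\<in>VH. \<Sum>h'\<in>VH. \<Sum>h''\<in>VH. (a1 + d1*B1 h h') * (a2 + d2*B2 h' h'') * (a3 + d3*B3 h h''))
    = real (card VH)^3 * (a1*a2*a3) + real (card VH) * (d1*a2*a3) * S2 B1 VH
      + real (card VH) * (d2*a1*a3) * S2 B2 VH + real (card VH) * (d3*a1*a2) * S2 B3 VH
      + (d1*d2*d3) * S3 B1 B2 B3 VH"
proof -
  have pw: "(a1 + d1*B1 h h') * (a2 + d2*B2 h' h'') * (a3 + d3*B3 h h'')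
     = a1*a2*a3 + (d1*a2*a3) * B1 h h' + (d2*a1*a3) * B2 h' h'' + (d3*a1*a2) * B3 h h''
       + (d1*d2*d3) * (B1 h h' * B2 h' h'' * B3 h h'')" for h h' h''
  proof -
    have "(a1 + d1*B1 h h') * (a2 + d2*B2 h' h'') * (a3 + d3*B3 h h'')
     = a1*a2*a3 + (d1*a2*a3) * B1 h h' + (d2*a1*a3) * B2 h' h'' + (d3*a1*a2) * B3 h h''
       + (d1*d2*d3) * (B1 h h' * B2 h' h'' * B3 h h'') + (d1*d2*a3)*(B1 h h' * B2 h' h'')
       + (d1*d3*a2)*(B1 h h' * B3 h h'') + (d2*d3*a1)*(B2 h' h'' * B3 h h'')"
      by (simp add: algebra_simps)
    then show ?thesis using assms by simp
  qed
  show ?thesis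
    unfolding pw
    by (simp add: sum.distrib sum_distrib_left[symmetric] sum_distrib_right[symmetric] S2_def S3_def power3_eq_cube algebra_simps)
qed

lemma sum_delta_mult:
  assumes "finite A" "a \<in> A"
  shows "(\<Sum>x\<in>A. (if a = x then 1 else 0) * (f x::real)) = f a"
proof -
  have "(\<Sum>x\<in>A. (if a = x then 1 else 0) * (f x::real)) = (\<Sum>x\<in>A. if a = x then f x else 0)"
    by (rule sum.cong) auto
  also have "\<dots> = f a" using assms by simp
  finally show ?thesis .
qed

lemma D1:
  assumes "finite VG"
  shows "(\<Sum>g\<in>VG. \<Sum>g'\<in>VG. \<Sum>g''\<in>VG. (if g = g' then 1 else 0) * (X g g' g''::real))
    = (\<Sum>g\<in>VG. \<Sum>g''\<in>VG. X g g g'')"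
proof (rule sum.cong[OF refl])
  fix g assume g: "g \<in> VG"
  have "(\<Sum>g'\<in>VG. \<Sum>g''\<in>VG. (if g = g' then 1 else 0) * X g g' g'')
     = (\<Sum>g'\<in>VG. (if g = g' then 1 else 0) * (\<Sum>g''\<in>VG. X g g' g''))"
    by (simp add: sum_distrib_left)
  also have "\<dots> = (\<Sum>g''\<in>VG. X g g g'')" using assms g by (rule sum_delta_mult)
  finally show "(\<Sum>g'\<in>VG. \<Sum>g''\<in>VG. (if g = g' then 1 else 0) * X g g' g'') = (\<Sum>g''\<in>VG. X g g g'')" .
qed

lemma D2:
  assumes "finite VG"
  shows "(\<Sum>g\<in>VG. \<Sum>g'\<in>VG. \<Sum>g''\<in>VG. (if g' = g'' then 1 else 0) * (X g g' g''::real))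
    = (\<Sum>g\<in>VG. \<Sum>g'\<in>VG. X g g' g')"
  by (intro sum.cong refl) (simp add: sum_delta_mult assms)

lemma D3:
  assumes "finite VG"
  shows "(\<Sum>g\<in>VG. \<Sum>g'\<in>VG. \<Sum>g''\<in>VG. (if g = g'' then 1 else 0) * (X g g' g''::real))
    = (\<Sum>g\<in>VG. \<Sum>g'\<in>VG. X g g' g)"
  by (intro sum.cong refl) (simp add: sum_delta_mult assms)

lemma D123:
  assumes "finite VG"
  shows "(\<Sum>g\<in>VG. \<Sum>g'\<in>VG. \<Sum>g''\<in>VG. (if g = g' then 1 else 0) * (if g' = g'' then 1 else 0) * (if g = g'' then 1 else 0) * (c::real))
    = real (card VG) * c"
proof -
  have "(\<Sum>g\<in>VG. \<Sum>g'\<in>VG. \<Sum>g''\<in>VG. (if g = g' then 1 else 0) * (if g' = g'' then 1 else 0) * (if g = g'' then 1 else 0) * (c::real))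
   = (\<Sum>g\<in>VG. \<Sum>g'\<in>VG. \<Sum>g''\<in>VG. (if g = g' then 1 else 0) * ((if g' = g'' then 1 else 0) * (if g = g'' then 1 else 0) * (c::real)))"
    by (simp add: mult.assoc)
  also have "\<dots> = (\<Sum>g\<in>VG. \<Sum>g''\<in>VG. (if g = g'' then 1 else 0) * (if g = g'' then 1 else 0) * c)"
    using assms by (rule D1)
  also have "\<dots> = (\<Sum>g\<in>VG. \<Sum>g''\<in>VG. (if g = g'' then 1 else 0) * c)"
    by (intro sum.cong refl) auto
  also have "\<dots> = (\<Sum>g\<in>VG. c)" by (intro sum.cong refl) (simp add: sum_delta_mult assms)
  finally show ?thesis by simp
qed

lemma expand3:
  fixes A1 A2 A3 :: "'a \<Rightarrow> 'a \<Rightarrow> real" and B1 B2 B3 :: "'b \<Rightarrow> 'b \<Rightarrow> real"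
  assumes fin: "finite VG" and A0: "\<forall>g\<in>VG. A1 g g = 0 \<and> A2 g g = 0 \<and> A3 g g = 0"
  shows "(\<Sum>g\<in>VG. \<Sum>g'\<in>VG. \<Sum>g''\<in>VG. \<Sum>h\<in>VH. \<Sum>h'\<in>VH. \<Sum>h''\<in>VH.
      (A1 g g' + (if g = g' then 1 else 0) * B1 h h') * (A2 g' g'' + (if g' = g'' then 1 else 0) * B2 h' h'')
      * (A3 g g'' + (if g = g'' then 1 else 0) * B3 h h''))
    = real (card VH)^3 * S3 A1 A2 A3 VG
      + real (card VH) * S2 B1 VH * (\<Sum>g\<in>VG. \<Sum>g''\<in>VG. A2 g g'' * A3 g g'')
      + real (card VH) * S2 B2 VH * (\<Sum>g\<in>VG. \<Sum>g'\<in>VG. A1 g g' * A3 g g')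
      + real (card VH) * S2 B3 VH * (\<Sum>g\<in>VG. \<Sum>g'\<in>VG. A1 g g' * A2 g' g)
      + real (card VG) * S3 B1 B2 B3 VH"
proof -
  let ?m = "real (card VH)"
  define d :: "'a \<Rightarrow> 'a \<Rightarrow> real" where "d x y = (if x = y then 1 else 0)" for x y
  have inner: "(\<Sum>h\<in>VH. \<Sum>h'\<in>VH. \<Sum>h''\<in>VH.
      (A1 g g' + (if g = g' then 1 else 0) * B1 h h') * (A2 g' g'' + (if g' = g'' then 1 else 0) * B2 h' h'')
      * (A3 g g'' + (if g = g'' then 1 else 0) * B3 h h''))
     = ?m^3 * (A1 g g' * A2 g' g'' * A3 g g'')
       + ?m * S2 B1 VH * ((if g = g' then 1 else 0) * (A2 g' g'' * A3 g g''))
       + ?m * S2 B2 VH * ((if g' = g'' then 1 else 0) * (A1 g g' * A3 g g''))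
       + ?m * S2 B3 VH * ((if g = g'' then 1 else 0) * (A1 g g' * A2 g' g''))
       + S3 B1 B2 B3 VH * ((if g = g' then 1 else 0) * (if g' = g'' then 1 else 0) * (if g = g'' then 1 else 0))"
    if "g \<in> VG" "g' \<in> VG" "g'' \<in> VG" for g g' g''
  proof -
    have "(\<Sum>h\<in>VH. \<Sum>h'\<in>VH. \<Sum>h''\<in>VH.
      (A1 g g' + (if g = g' then 1 else 0) * B1 h h') * (A2 g' g'' + (if g' = g'' then 1 else 0) * B2 h' h'')
      * (A3 g g'' + (if g = g'' then 1 else 0) * B3 h h''))
      = ?m^3 * (A1 g g' * A2 g' g'' * A3 g g'') + ?m * ((if g = g' then 1 else 0) * A2 g' g'' * A3 g g'') * S2 B1 VH
      + ?m * ((if g' = g'' then 1 else 0) * A1 g g' * A3 g g'') * S2 B2 VH + ?m * ((if g = g'' then 1 else 0) * A1 g g' * A2 g' g'') * S2 B3 VH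
      + ((if g = g' then 1 else 0) * (if g' = g'' then 1 else 0) * (if g = g'' then 1 else 0)) * S3 B1 B2 B3 VH"
      by (rule inner_H) (use that A0 in auto)
    then show ?thesis by (simp add: algebra_simps)
  qed
  have "(\<Sum>g\<in>VG. \<Sum>g'\<in>VG. \<Sum>g''\<in>VG. \<Sum>h\<in>VH. \<Sum>h'\<in>VH. \<Sum>h''\<in>VH.
      (A1 g g' + (if g = g' then 1 else 0) * B1 h h') * (A2 g' g'' + (if g' = g'' then 1 else 0) * B2 h' h'')
      * (A3 g g'' + (if g = g'' then 1 else 0) * B3 h h''))
    = (\<Sum>g\<in>VG. \<Sum>g'\<in>VG. \<Sum>g''\<in>VG. ?m^3 * (A1 g g' * A2 g' g'' * A3 g g'')
       + ?m * S2 B1 VH * ((if g = g' then 1 else 0) * (A2 g' g'' * A3 g g''))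
       + ?m * S2 B2 VH * ((if g' = g'' then 1 else 0) * (A1 g g' * A3 g g''))
       + ?m * S2 B3 VH * ((if g = g'' then 1 else 0) * (A1 g g' * A2 g' g''))
       + S3 B1 B2 B3 VH * ((if g = g' then 1 else 0) * (if g' = g'' then 1 else 0) * (if g = g'' then 1 else 0)))"
    by (intro sum.cong refl) (simp add: inner)
  also have "\<dots> = ?m^3 * S3 A1 A2 A3 VG
      + ?m * S2 B1 VH * (\<Sum>g\<in>VG. \<Sum>g'\<in>VG. \<Sum>g''\<in>VG. (if g = g' then 1 else 0) * (A2 g' g'' * A3 g g''))
      + ?m * S2 B2 VH * (\<Sum>g\<in>VG. \<Sum>g'\<in>VG. \<Sum>g''\<in>VG. (if g' = g'' then 1 else 0) * (A1 g g' * A3 g g''))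
      + ?m * S2 B3 VH * (\<Sum>g\<in>VG. \<Sum>g'\<in>VG. \<Sum>g''\<in>VG. (if g = g'' then 1 else 0) * (A1 g g' * A2 g' g''))
      + S3 B1 B2 B3 VH * (\<Sum>g\<in>VG. \<Sum>g'\<in>VG. \<Sum>g''\<in>VG. (if g = g' then 1 else 0) * (if g' = g'' then 1 else 0) * (if g = g'' then 1 else 0) * 1)"
    by (simp only: sum.distrib sum_distrib_left[symmetric] S3_def mult_1_right)
  also have "\<dots> = ?m^3 * S3 A1 A2 A3 VG
      + ?m * S2 B1 VH * (\<Sum>g\<in>VG. \<Sum>g''\<in>VG. A2 g g'' * A3 g g'')
      + ?m * S2 B2 VH * (\<Sum>g\<in>VG. \<Sum>g'\<in>VG. A1 g g' * A3 g g')
      + ?m * S2 B3 VH * (\<Sum>g\<in>VG. \<Sum>g'\<in>VG. A1 g g' * A2 g' g)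
      + S3 B1 B2 B3 VH * (real (card VG) * 1)"
    by (simp only: D1[OF fin] D2[OF fin] D3[OF fin] D123[OF fin])
  finally show ?thesis by simp
qed

lemma card_triples:
  assumes fin: "finite V"
  shows "card {(x,y,z). x\<in>V \<and> y\<in>V \<and> z\<in>V \<and> x\<noteq>y \<and> x\<noteq>z \<and> y\<noteq>z \<and> P {x,y,z}}
       = 6 * card {S. S \<subseteq> V \<and> card S = 3 \<and> P S}"
proof -
  let ?T = "{(x,y,z). x\<in>V \<and> y\<in>V \<and> z\<in>V \<and> x\<noteq>y \<and> x\<noteq>z \<and> y\<noteq>z \<and> P {x,y,z}}"
  define f where "f = (\<lambda>(x::'a,y::'a,z::'a). {x,y,z})"
  have finT: "finite ?T"
    by (rule finite_subset[of _ "V \<times> V \<times> V"]) (auto simp: fin)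
  have img: "f ` ?T = {S. S \<subseteq> V \<and> card S = 3 \<and> P S}"
  proof
    show "f ` ?T \<subseteq> {S. S \<subseteq> V \<and> card S = 3 \<and> P S}"
      by (auto simp: f_def)
  next
    show "{S. S \<subseteq> V \<and> card S = 3 \<and> P S} \<subseteq> f ` ?T"
    proof
      fix S assume "S \<in> {S. S \<subseteq> V \<and> card S = 3 \<and> P S}"
      then have S: "S \<subseteq> V" "card S = 3" "P S" by auto
      then obtain x y z where xyz: "S = {x,y,z}" "x \<noteq> y" "y \<noteq> z" "x \<noteq> z"
        by (auto simp: card_3_iff)
      then have "(x,y,z) \<in> ?T" using S by auto
      moreover have "S = f (x,y,z)" using xyz by (simp add: f_def)
      ultimately show "S \<in> f ` ?T" by blast
    qed
  qed
  have fib: "card {t. t \<in> ?T \<and> f t = S} = 6" if "S \<in> f ` ?T" for S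
  proof -
    obtain u v w where uvw: "(u,v,w) \<in> ?T" "S = {u,v,w}" using \<open>S \<in> f ` ?T\<close> by (auto simp: f_def)
    have "{t. t \<in> ?T \<and> f t = S} = {(u,v,w),(u,w,v),(v,u,w),(v,w,u),(w,u,v),(w,v,u)}"
    proof
      show "{t. t \<in> ?T \<and> f t = S} \<subseteq> {(u,v,w),(u,w,v),(v,u,w),(v,w,u),(w,u,v),(w,v,u)}"
      proof
        fix t assume "t \<in> {t. t \<in> ?T \<and> f t = S}"
        then obtain x y z where t: "t = (x,y,z)" "x \<noteq> y" "x \<noteq> z" "y \<noteq> z" "{x,y,z} = {u,v,w}"
          using uvw by (auto simp: f_def)
        have "x \<in> {u,v,w}" "y \<in> {u,v,w}" "z \<in> {u,v,w}" using t(5) by blast+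
        moreover have "u \<in> {x,y,z}" "v \<in> {x,y,z}" "w \<in> {x,y,z}" using t(5) by blast+
        ultimately show "t \<in> {(u,v,w),(u,w,v),(v,u,w),(v,w,u),(w,u,v),(w,v,u)}"
          using t(1-4) uvw(1) by auto
      qed
    next
      show "{(u,v,w),(u,w,v),(v,u,w),(v,w,u),(w,u,v),(w,v,u)} \<subseteq> {t. t \<in> ?T \<and> f t = S}"
        using uvw by (auto simp: f_def insert_commute)
    qed
    then show ?thesis using uvw(1) by auto
  qed
  have "card ?T = (\<Sum>t\<in>?T. 1)" by simp
  also have "\<dots> = (\<Sum>S\<in>f ` ?T. \<Sum>t\<in>{t. t \<in> ?T \<and> f t = S}. 1)"
    by (rule sum.image_gen[OF finT])
  also have "\<dots> = (\<Sum>S\<in>f ` ?T. 6)"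
    by (rule sum.cong[OF refl]) (simp only: fib card_eq_sum[symmetric])
  also have "\<dots> = 6 * card (f ` ?T)" by simp
  finally have "card ?T = 6 * card (f ` ?T)" .
  then show ?thesis unfolding img .
qed

lemma card_pairs:
  assumes fin: "finite V"
  shows "card {(x,y). x\<in>V \<and> y\<in>V \<and> x\<noteq>y \<and> P {x,y}}
       = 2 * card {S. S \<subseteq> V \<and> card S = 2 \<and> P S}"
proof -
  let ?T = "{(x,y). x\<in>V \<and> y\<in>V \<and> x\<noteq>y \<and> P {x,y}}"
  define f where "f = (\<lambda>(x::'a,y::'a). {x,y})"
  have finT: "finite ?T"
    by (rule finite_subset[of _ "V \<times> V"]) (auto simp: fin)
  have img: "f ` ?T = {S. S \<subseteq> V \<and> card S = 2 \<and> P S}"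
  proof
    show "f ` ?T \<subseteq> {S. S \<subseteq> V \<and> card S = 2 \<and> P S}"
      by (auto simp: f_def)
  next
    show "{S. S \<subseteq> V \<and> card S = 2 \<and> P S} \<subseteq> f ` ?T"
    proof
      fix S assume "S \<in> {S. S \<subseteq> V \<and> card S = 2 \<and> P S}"
      then have S: "S \<subseteq> V" "card S = 2" "P S" by auto
      then obtain x y where xyz: "S = {x,y}" "x \<noteq> y"
        by (auto simp: card_2_iff)
      then have "(x,y) \<in> ?T" using S by auto
      moreover have "S = f (x,y)" using xyz by (simp add: f_def)
      ultimately show "S \<in> f ` ?T" by blast
    qed
  qed
  have fib: "card {t. t \<in> ?T \<and> f t = S} = 2" if "S \<in> f ` ?T" for S
  proof -
    obtain u v where uvw: "(u,v) \<in> ?T" "S = {u,v}" using \<open>S \<in> f ` ?T\<close> by (auto simp: f_def)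
    have "{t. t \<in> ?T \<and> f t = S} = {(u,v),(v,u)}"
    proof
      show "{t. t \<in> ?T \<and> f t = S} \<subseteq> {(u,v),(v,u)}"
      proof
        fix t assume "t \<in> {t. t \<in> ?T \<and> f t = S}"
        then obtain x y where t: "t = (x,y)" "x \<noteq> y" "{x,y} = {u,v}"
          using uvw by (auto simp: f_def)
        then show "t \<in> {(u,v),(v,u)}"
          by (auto simp: doubleton_eq_iff)
      qed
    next
      show "{(u,v),(v,u)} \<subseteq> {t. t \<in> ?T \<and> f t = S}"
        using uvw by (auto simp: f_def insert_commute)
    qed
    then show ?thesis using uvw(1) by auto
  qed
  have "card ?T = (\<Sum>t\<in>?T. 1)" by simp
  also have "\<dots> = (\<Sum>S\<in>f ` ?T. \<Sum>t\<in>{t. t \<in> ?T \<and> f t = S}. 1)"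
    by (rule sum.image_gen[OF finT])
  also have "\<dots> = (\<Sum>S\<in>f ` ?T. 2)"
    by (rule sum.cong[OF refl]) (simp only: fib card_eq_sum[symmetric])
  also have "\<dots> = 2 * card (f ` ?T)" by simp
  finally have "card ?T = 2 * card (f ` ?T)" .
  then show ?thesis unfolding img .
qed

definition aa :: "'a graph \<Rightarrow> 'a \<Rightarrow> 'a \<Rightarrow> real" where
  "aa G x y = (if adj G x y then 1 else 0)"
definition bb :: "'a graph \<Rightarrow> 'a \<Rightarrow> 'a \<Rightarrow> real" where
  "bb G x y = (if x \<noteq> y \<and> \<not> adj G x y then 1 else 0)"

lemma sg_irrefl: "simple_graph G \<Longrightarrow> \<not> adj G x x"
  by (auto simp: simple_graph_def adj_def)

lemma adj_sym: "adj G x y = adj G y x"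
  by (simp add: adj_def insert_commute)

lemma adj_in: "simple_graph G \<Longrightarrow> adj G x y \<Longrightarrow> x \<in> verts G \<and> y \<in> verts G"
  by (auto simp: simple_graph_def adj_def)

lemma iso3:
  assumes d: "x\<noteq>y" "x\<noteq>z" "y\<noteq>z" and irG: "\<And>w. \<not> adj G w w" and irF: "\<And>i. \<not> adj F i i"
  shows "induced_iso G {x,y,z} F \<longleftrightarrow> (\<exists>i j k. verts F = {i,j,k} \<and> i\<noteq>j \<and> i\<noteq>k \<and> j\<noteq>k \<and>
     (adj G x y \<longleftrightarrow> adj F i j) \<and> (adj G y z \<longleftrightarrow> adj F j k) \<and> (adj G x z \<longleftrightarrow> adj F i k))"
proof
  assume "induced_iso G {x,y,z} F"
  then obtain f where f: "bij_betw f {x,y,z} (verts F)"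
    "\<forall>u\<in>{x,y,z}. \<forall>v\<in>{x,y,z}. adj G u v \<longleftrightarrow> adj F (f u) (f v)"
    by (auto simp: induced_iso_def)
  have "verts F = {f x, f y, f z}" using bij_betw_imp_surj_on[OF f(1)] by auto
  moreover have "f x \<noteq> f y" "f x \<noteq> f z" "f y \<noteq> f z"
    using bij_betw_imp_inj_on[OF f(1)] d by (auto dest: inj_onD)
  ultimately show "\<exists>i j k. verts F = {i,j,k} \<and> i\<noteq>j \<and> i\<noteq>k \<and> j\<noteq>k \<and>
     (adj G x y \<longleftrightarrow> adj F i j) \<and> (adj G y z \<longleftrightarrow> adj F j k) \<and> (adj G x z \<longleftrightarrow> adj F i k)"
    using f(2) by blast
next
  assume "\<exists>i j k. verts F = {i,j,k} \<and> i\<noteq>j \<and> i\<noteq>k \<and> j\<noteq>k \<and>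
     (adj G x y \<longleftrightarrow> adj F i j) \<and> (adj G y z \<longleftrightarrow> adj F j k) \<and> (adj G x z \<longleftrightarrow> adj F i k)"
  then obtain i j k where ijk: "verts F = {i,j,k}" "i\<noteq>j" "i\<noteq>k" "j\<noteq>k"
     "adj G x y \<longleftrightarrow> adj F i j" "adj G y z \<longleftrightarrow> adj F j k" "adj G x z \<longleftrightarrow> adj F i k" by blast
  define f where "f w = (if w = x then i else if w = y then j else k)" for w
  have "bij_betw f {x,y,z} (verts F)"
  proof (rule bij_betw_imageI)
    have fx: "f x = i" "f y = j" "f z = k" using d by (auto simp: f_def)
    have im: "f ` {x,y,z} = {i,j,k}" by (simp add: fx)
    then show "f ` {x,y,z} = verts F" using ijk(1) by simp
    have "card (f ` {x,y,z}) = card {x,y,z}" unfolding im using ijk(2-4) d by simp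
    then show "inj_on f {x,y,z}" by (rule eq_card_imp_inj_on[rotated]) simp
  qed
  moreover have "\<forall>u\<in>{x,y,z}. \<forall>v\<in>{x,y,z}. adj G u v \<longleftrightarrow> adj F (f u) (f v)"
  proof -
    have "adj G y x \<longleftrightarrow> adj F j i" "adj G z y \<longleftrightarrow> adj F k j" "adj G z x \<longleftrightarrow> adj F k i"
      using ijk(5-7) adj_sym by metis+
    then show ?thesis using ijk d irG irF by (auto simp: f_def)
  qed
  ultimately show "induced_iso G {x,y,z} F" unfolding induced_iso_def by blast
qed

lemma iso2:
  assumes d: "x\<noteq>y" and irG: "\<And>w. \<not> adj G w w"
  shows "induced_iso G {x,y} K2 \<longleftrightarrow> adj G x y"
proof
  assume "induced_iso G {x,y} K2"
  then obtain f where f: "bij_betw f {x,y} (verts K2)"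
    "\<forall>u\<in>{x,y}. \<forall>v\<in>{x,y}. adj G u v \<longleftrightarrow> adj K2 (f u) (f v)"
    by (auto simp: induced_iso_def)
  have "{f x, f y} = {0,1}" using bij_betw_imp_surj_on[OF f(1)] by (auto simp: K2_def verts_def)
  then have "adj K2 (f x) (f y)" by (simp add: adj_def K2_def edges_def)
  then show "adj G x y" using f(2) by auto
next
  assume a: "adj G x y"
  define f where "f w = (if w = x then (0::nat) else 1)" for w
  have "bij_betw f {x,y} (verts K2)"
    unfolding bij_betw_def inj_on_def using d by (auto simp: f_def K2_def verts_def)
  moreover have "\<forall>u\<in>{x,y}. \<forall>v\<in>{x,y}. adj G u v \<longleftrightarrow> adj K2 (f u) (f v)"
  proof -
    have K: "adj K2 0 1" "adj K2 1 0" "\<not> adj K2 0 0" "\<not> adj K2 1 1"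
      by (simp_all add: adj_def K2_def edges_def doubleton_eq_iff)
    have "adj G y x" using a adj_sym by metis
    then show ?thesis using d irG a K by (auto simp: f_def)
  qed
  ultimately show "induced_iso G {x,y} K2" unfolding induced_iso_def by blast
qed


lemma ex_perm3:
  "(\<exists>i j k. {0::nat,1,2} = {i,j,k} \<and> i\<noteq>j \<and> i\<noteq>k \<and> j\<noteq>k \<and> Q i j k) \<longleftrightarrow>
    Q 0 1 2 \<or> Q 0 2 1 \<or> Q 1 0 2 \<or> Q 1 2 0 \<or> Q 2 0 1 \<or> Q 2 1 0"
proof
  assume "\<exists>i j k. {0::nat,1,2} = {i,j,k} \<and> i\<noteq>j \<and> i\<noteq>k \<and> j\<noteq>k \<and> Q i j k"
  then obtain i j k where ijk: "{0::nat,1,2} = {i,j,k}" "i\<noteq>j" "i\<noteq>k" "j\<noteq>k" "Q i j k" by blast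
  have "i \<in> {0,1,2}" "j \<in> {0,1,2}" "k \<in> {0,1,2}" using ijk(1) by blast+
  then have "i = 0 \<or> i = 1 \<or> i = 2" "j = 0 \<or> j = 1 \<or> j = 2" "k = 0 \<or> k = 1 \<or> k = 2" by auto
  then show "Q 0 1 2 \<or> Q 0 2 1 \<or> Q 1 0 2 \<or> Q 1 2 0 \<or> Q 2 0 1 \<or> Q 2 1 0"
    using ijk(2-5) by (elim disjE) simp_all
next
  have s: "{0::nat,1,2} = {0,2,1}" "{0::nat,1,2} = {1,0,2}" "{0::nat,1,2} = {1,2,0}"
     "{0::nat,1,2} = {2,0,1}" "{0::nat,1,2} = {2,1,0}" by auto
  assume "Q 0 1 2 \<or> Q 0 2 1 \<or> Q 1 0 2 \<or> Q 1 2 0 \<or> Q 2 0 1 \<or> Q 2 1 0"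
  then show "\<exists>i j k. {0::nat,1,2} = {i,j,k} \<and> i\<noteq>j \<and> i\<noteq>k \<and> j\<noteq>k \<and> Q i j k"
  proof (elim disjE)
    assume "Q 0 1 2" then show ?thesis by (intro exI[of _ 0] exI[of _ 1] exI[of _ 2]) simp
  next
    assume "Q 0 2 1" then show ?thesis using s(1) by (intro exI[of _ 0] exI[of _ 2] exI[of _ 1]) simp
  next
    assume "Q 1 0 2" then show ?thesis using s(2) by (intro exI[of _ 1] exI[of _ 0] exI[of _ 2]) simp
  next
    assume "Q 1 2 0" then show ?thesis using s(3) by (intro exI[of _ 1] exI[of _ 2] exI[of _ 0]) simp
  next
    assume "Q 2 0 1" then show ?thesis using s(4) by (intro exI[of _ 2] exI[of _ 0] exI[of _ 1]) simp
  next
    assume "Q 2 1 0" then show ?thesis using s(5) by (intro exI[of _ 2] exI[of _ 1] exI[of _ 0]) simp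
  qed
qed

lemma iso3_perm:
  assumes d: "x\<noteq>y" "x\<noteq>z" "y\<noteq>z" and irG: "\<And>w. \<not> adj G w w" and irF: "\<And>i. \<not> adj F i i"
    and vF: "verts F = {0::nat,1,2}"
  shows "induced_iso G {x,y,z} F \<longleftrightarrow>
    ((adj G x y \<longleftrightarrow> adj F 0 1) \<and> (adj G y z \<longleftrightarrow> adj F 1 2) \<and> (adj G x z \<longleftrightarrow> adj F 0 2)) \<or>
    ((adj G x y \<longleftrightarrow> adj F 0 2) \<and> (adj G y z \<longleftrightarrow> adj F 2 1) \<and> (adj G x z \<longleftrightarrow> adj F 0 1)) \<or>
    ((adj G x y \<longleftrightarrow> adj F 1 0) \<and> (adj G y z \<longleftrightarrow> adj F 0 2) \<and> (adj G x z \<longleftrightarrow> adj F 1 2)) \<or>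
    ((adj G x y \<longleftrightarrow> adj F 1 2) \<and> (adj G y z \<longleftrightarrow> adj F 2 0) \<and> (adj G x z \<longleftrightarrow> adj F 1 0)) \<or>
    ((adj G x y \<longleftrightarrow> adj F 2 0) \<and> (adj G y z \<longleftrightarrow> adj F 0 1) \<and> (adj G x z \<longleftrightarrow> adj F 2 1)) \<or>
    ((adj G x y \<longleftrightarrow> adj F 2 1) \<and> (adj G y z \<longleftrightarrow> adj F 1 0) \<and> (adj G x z \<longleftrightarrow> adj F 2 0))"
  unfolding iso3[OF d irG irF] vF
  by (rule ex_perm3[where Q = "\<lambda>i j k. (adj G x y \<longleftrightarrow> adj F i j) \<and> (adj G y z \<longleftrightarrow> adj F j k) \<and> (adj G x z \<longleftrightarrow> adj F i k)"])

lemma aa_irrefl: "simple_graph G \<Longrightarrow> aa G x x = 0"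
  by (simp add: aa_def sg_irrefl)
lemma bb_irrefl: "bb G x x = 0"
  by (simp add: bb_def)
lemma aa_sym: "aa G x y = aa G y x"
  by (simp add: aa_def adj_sym[of G x y])
lemma bb_sym: "bb G x y = bb G y x"
  by (auto simp: bb_def adj_sym[of G x y])

lemma vK3: "verts K3 = {0,1,2}" and vcoK3: "verts coK3 = {0,1,2}" and vP3: "verts P3 = {0,1,2}"
  and vK2K1: "verts K2_K1 = {0,1,2}" and vK2: "verts K2 = {0,1}"
  by (simp_all add: verts_def K3_def coK3_def P3_def K2_K1_def K2_def)

lemma irK3: "\<not> adj K3 i i" and ircoK3: "\<not> adj coK3 i i" and irP3: "\<not> adj P3 i i"
  and irK2K1: "\<not> adj K2_K1 i i"
  by (auto simp: adj_def edges_def K3_def coK3_def P3_def K2_K1_def)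

lemma K3_adj: "adj K3 0 1" "adj K3 1 0" "adj K3 1 2" "adj K3 2 1" "adj K3 0 2" "adj K3 2 0"
  by (simp_all add: adj_def edges_def K3_def doubleton_eq_iff)
lemma coK3_adj: "\<not>adj coK3 0 1" "\<not>adj coK3 1 0" "\<not>adj coK3 1 2" "\<not>adj coK3 2 1" "\<not>adj coK3 0 2" "\<not>adj coK3 2 0"
  by (simp_all add: adj_def edges_def coK3_def)
lemma P3_adj: "adj P3 0 1" "adj P3 1 0" "adj P3 1 2" "adj P3 2 1" "\<not>adj P3 0 2" "\<not>adj P3 2 0"
  by (simp_all add: adj_def edges_def P3_def doubleton_eq_iff)
lemma K2K1_adj: "adj K2_K1 0 1" "adj K2_K1 1 0" "\<not>adj K2_K1 1 2" "\<not>adj K2_K1 2 1" "\<not>adj K2_K1 0 2" "\<not>adj K2_K1 2 0"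
  by (simp_all add: adj_def edges_def K2_K1_def doubleton_eq_iff)

lemma ind_K3:
  assumes G: "simple_graph G"
  shows "(if x\<noteq>y \<and> x\<noteq>z \<and> y\<noteq>z \<and> induced_iso G {x,y,z} K3 then 1 else 0) = aa G x y * aa G y z * aa G x z"
proof (cases "x\<noteq>y \<and> x\<noteq>z \<and> y\<noteq>z")
  case True
  then have d: "x\<noteq>y" "x\<noteq>z" "y\<noteq>z" by auto
  show ?thesis
    unfolding iso3_perm[OF d sg_irrefl[OF G] irK3 vK3] using d
    by (simp only: K3_adj simp_thms) (simp add: aa_def)
next
  case False
  then show ?thesis by (auto simp: aa_irrefl[OF G])
qed

lemma ind_coK3:
  assumes G: "simple_graph G"
  shows "(if x\<noteq>y \<and> x\<noteq>z \<and> y\<noteq>z \<and> induced_iso G {x,y,z} coK3 then 1 else 0) = bb G x y * bb G y z * bb G x z"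
proof (cases "x\<noteq>y \<and> x\<noteq>z \<and> y\<noteq>z")
  case True
  then have d: "x\<noteq>y" "x\<noteq>z" "y\<noteq>z" by auto
  show ?thesis
    unfolding iso3_perm[OF d sg_irrefl[OF G] ircoK3 vcoK3] using d
    by (simp only: coK3_adj simp_thms) (simp add: bb_def)
next
  case False
  then show ?thesis by (auto simp: bb_irrefl)
qed

lemma ind_P3:
  assumes G: "simple_graph G"
  shows "(if x\<noteq>y \<and> x\<noteq>z \<and> y\<noteq>z \<and> induced_iso G {x,y,z} P3 then 1 else 0) =
     aa G x y * aa G y z * bb G x z + aa G x y * bb G y z * aa G x z + bb G x y * aa G y z * aa G x z"
proof (cases "x\<noteq>y \<and> x\<noteq>z \<and> y\<noteq>z")
  case True
  then have d: "x\<noteq>y" "x\<noteq>z" "y\<noteq>z" by auto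
  show ?thesis
    unfolding iso3_perm[OF d sg_irrefl[OF G] irP3 vP3] using d
    by (simp only: P3_adj simp_thms) (simp add: aa_def bb_def)
next
  case False
  then show ?thesis by (auto simp: bb_irrefl aa_irrefl[OF G])
qed

lemma ind_K2K1:
  assumes G: "simple_graph G"
  shows "(if x\<noteq>y \<and> x\<noteq>z \<and> y\<noteq>z \<and> induced_iso G {x,y,z} K2_K1 then 1 else 0) =
     bb G x y * bb G y z * aa G x z + bb G x y * aa G y z * bb G x z + aa G x y * bb G y z * bb G x z"
proof (cases "x\<noteq>y \<and> x\<noteq>z \<and> y\<noteq>z")
  case True
  then have d: "x\<noteq>y" "x\<noteq>z" "y\<noteq>z" by auto
  show ?thesis
    unfolding iso3_perm[OF d sg_irrefl[OF G] irK2K1 vK2K1] using d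
    by (simp only: K2K1_adj simp_thms) (simp add: aa_def bb_def)
next
  case False
  then show ?thesis by (auto simp: bb_irrefl aa_irrefl[OF G])
qed

lemma ind_K2:
  assumes G: "simple_graph G"
  shows "(if x\<noteq>y \<and> induced_iso G {x,y} K2 then 1 else 0) = aa G x y"
  using iso2[OF _ sg_irrefl[OF G]] aa_irrefl[OF G] by (cases "x = y") (auto simp: aa_def)

lemma verts_inflate: "verts (inflate G H) = verts G \<times> verts H"
  by (simp add: inflate_def verts_def)

lemma adj_inflate:
  assumes G: "simple_graph G" and H: "simple_graph H"
  shows "adj (inflate G H) (g,h) (g',h') \<longleftrightarrow> g \<in> verts G \<and> g' \<in> verts G \<and> h \<in> verts H \<and> h' \<in> verts H \<and>
     (adj G g g' \<or> (g = g' \<and> adj H h h'))"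
proof
  assume "adj (inflate G H) (g,h) (g',h')"
  then obtain g1 h1 g2 h2 where e: "{(g,h),(g',h')} = {(g1,h1),(g2,h2)}"
     "g1 \<in> verts G" "g2 \<in> verts G" "h1 \<in> verts H" "h2 \<in> verts H"
     "adj G g1 g2 \<or> (g1 = g2 \<and> adj H h1 h2)"
    unfolding adj_def[of "inflate G H"] by (auto simp: inflate_def edges_def)
  have sG: "adj G g2 g1" if "adj G g1 g2" using that adj_sym by metis
  have sH: "adj H h2 h1" if "adj H h1 h2" using that adj_sym by metis
  from e(1) have "((g,h) = (g1,h1) \<and> (g',h') = (g2,h2)) \<or> ((g,h) = (g2,h2) \<and> (g',h') = (g1,h1))"
    by (simp add: doubleton_eq_iff)
  then show "g \<in> verts G \<and> g' \<in> verts G \<and> h \<in> verts H \<and> h' \<in> verts H \<and>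
     (adj G g g' \<or> (g = g' \<and> adj H h h'))"
    using e(2-6) sG sH by auto
next
  assume "g \<in> verts G \<and> g' \<in> verts G \<and> h \<in> verts H \<and> h' \<in> verts H \<and>
     (adj G g g' \<or> (g = g' \<and> adj H h h'))"
  then show "adj (inflate G H) (g,h) (g',h')"
    unfolding adj_def[of "inflate G H"] by (auto simp: inflate_def edges_def)
qed

lemma simple_inflate:
  assumes G: "simple_graph G" and H: "simple_graph H"
  shows "simple_graph (inflate G H)"
  unfolding simple_graph_def
proof
  show "finite (verts (inflate G H))" using G H by (simp add: verts_inflate simple_graph_def)
  show "\<forall>e\<in>edges (inflate G H). e \<subseteq> verts (inflate G H) \<and> card e = 2"
  proof
    fix e assume "e \<in> edges (inflate G H)"
    then obtain g h g' h' where e: "e = {(g,h),(g',h')}" "g \<in> verts G" "g' \<in> verts G" "h \<in> verts H" "h' \<in> verts H"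
      "adj G g g' \<or> (g = g' \<and> adj H h h')"
      by (auto simp: inflate_def edges_def)
    have "(g,h) \<noteq> (g',h')" using e(6) sg_irrefl[OF G] sg_irrefl[OF H] by auto
    then show "e \<subseteq> verts (inflate G H) \<and> card e = 2" using e by (auto simp: verts_inflate)
  qed
qed

lemma aa_inflate:
  assumes G: "simple_graph G" and H: "simple_graph H"
    and "g \<in> verts G" "g' \<in> verts G" "h \<in> verts H" "h' \<in> verts H"
  shows "aa (inflate G H) (g,h) (g',h') = aa G g g' + (if g = g' then 1 else 0) * aa H h h'"
  using assms sg_irrefl[OF G] by (auto simp: aa_def adj_inflate)

lemma bb_inflate:
  assumes G: "simple_graph G" and H: "simple_graph H"
    and "g \<in> verts G" "g' \<in> verts G" "h \<in> verts H" "h' \<in> verts H"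
  shows "bb (inflate G H) (g,h) (g',h') = bb G g g' + (if g = g' then 1 else 0) * bb H h h'"
  using assms sg_irrefl[OF G] by (auto simp: bb_def adj_inflate)

lemma sum6:
  fixes F :: "'a \<times> 'b \<Rightarrow> 'a \<times> 'b \<Rightarrow> 'a \<times> 'b \<Rightarrow> real"
  shows "(\<Sum>p\<in>VG\<times>VH. \<Sum>q\<in>VG\<times>VH. \<Sum>r\<in>VG\<times>VH. F p q r)
    = (\<Sum>g\<in>VG. \<Sum>g'\<in>VG. \<Sum>g''\<in>VG. \<Sum>h\<in>VH. \<Sum>h'\<in>VH. \<Sum>h''\<in>VH. F (g,h) (g',h') (g'',h''))"
  by (simp only: sum.cartesian_product' sum.swap[where A=VH and B=VG])

lemma S3_infl:
  fixes AA AB AC :: "'a \<Rightarrow> 'a \<Rightarrow> real" and BA BB BC :: "'b \<Rightarrow> 'b \<Rightarrow> real"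
    and C1 C2 C3 :: "'a \<times> 'b \<Rightarrow> 'a \<times> 'b \<Rightarrow> real"
  assumes fin: "finite VG" and A0: "\<forall>g\<in>VG. AA g g = 0 \<and> AB g g = 0 \<and> AC g g = 0"
    and C1: "\<And>g g' h h'. g\<in>VG \<Longrightarrow> g'\<in>VG \<Longrightarrow> h\<in>VH \<Longrightarrow> h'\<in>VH \<Longrightarrow> C1 (g,h) (g',h') = AA g g' + (if g = g' then 1 else 0) * BA h h'"
    and C2: "\<And>g g' h h'. g\<in>VG \<Longrightarrow> g'\<in>VG \<Longrightarrow> h\<in>VH \<Longrightarrow> h'\<in>VH \<Longrightarrow> C2 (g,h) (g',h') = AB g g' + (if g = g' then 1 else 0) * BB h h'"
    and C3: "\<And>g g' h h'. g\<in>VG \<Longrightarrow> g'\<in>VG \<Longrightarrow> h\<in>VH \<Longrightarrow> h'\<in>VH \<Longrightarrow> C3 (g,h) (g',h') = AC g g' + (if g = g' then 1 else 0) * BC h h'"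
  shows "S3 C1 C2 C3 (VG \<times> VH) = real (card VH)^3 * S3 AA AB AC VG
      + real (card VH) * S2 BA VH * (\<Sum>g\<in>VG. \<Sum>g''\<in>VG. AB g g'' * AC g g'')
      + real (card VH) * S2 BB VH * (\<Sum>g\<in>VG. \<Sum>g'\<in>VG. AA g g' * AC g g')
      + real (card VH) * S2 BC VH * (\<Sum>g\<in>VG. \<Sum>g'\<in>VG. AA g g' * AB g' g)
      + real (card VG) * S3 BA BB BC VH"
proof -
  have eq: "S3 C1 C2 C3 (VG \<times> VH) = (\<Sum>g\<in>VG. \<Sum>g'\<in>VG. \<Sum>g''\<in>VG. \<Sum>h\<in>VH. \<Sum>h'\<in>VH. \<Sum>h''\<in>VH.
      (AA g g' + (if g = g' then 1 else 0) * BA h h') * (AB g' g'' + (if g' = g'' then 1 else 0) * BB h' h'')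
      * (AC g g'' + (if g = g'' then 1 else 0) * BC h h''))"
    unfolding S3_def sum6 by (intro sum.cong refl) (simp add: C1 C2 C3)
  show ?thesis unfolding eq by (rule expand3[of VG AA AB AC, OF fin A0])
qed

lemma S2_infl:
  fixes A :: "'a \<Rightarrow> 'a \<Rightarrow> real" and B :: "'b \<Rightarrow> 'b \<Rightarrow> real"
    and C :: "'a \<times> 'b \<Rightarrow> 'a \<times> 'b \<Rightarrow> real"
  assumes fin: "finite VG"
    and C: "\<And>g g' h h'. g\<in>VG \<Longrightarrow> g'\<in>VG \<Longrightarrow> h\<in>VH \<Longrightarrow> h'\<in>VH \<Longrightarrow> C (g,h) (g',h') = A g g' + (if g = g' then 1 else 0) * B h h'"
  shows "S2 C (VG \<times> VH) = real (card VH)^2 * S2 A VG + real (card VG) * S2 B VH"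
proof -
  have "S2 C (VG \<times> VH) = (\<Sum>g\<in>VG. \<Sum>g'\<in>VG. \<Sum>h\<in>VH. \<Sum>h'\<in>VH. A g g' + (if g = g' then 1 else 0) * B h h')"
    unfolding S2_def sum.cartesian_product' sum.swap[where A=VH and B=VG]
    by (intro sum.cong refl) (simp add: C)
  also have "\<dots> = (\<Sum>g\<in>VG. \<Sum>g'\<in>VG. real (card VH)^2 * A g g') + (\<Sum>g\<in>VG. \<Sum>g'\<in>VG. (if g = g' then 1 else 0) * S2 B VH)"
  proof -
    have "(\<Sum>h\<in>VH. \<Sum>h'\<in>VH. A g g' + (if g = g' then 1 else 0) * B h h')
      = real (card VH)^2 * A g g' + (if g = g' then 1 else 0) * S2 B VH" for g g'
      by (simp add: sum.distrib sum_distrib_left[symmetric] S2_def power2_eq_square)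
    then show ?thesis by (simp add: sum.distrib)
  qed
  also have "\<dots> = real (card VH)^2 * S2 A VG + real (card VG) * S2 B VH"
    using fin by (simp add: S2_def sum_distrib_left[symmetric] sum_delta_mult)
  finally show ?thesis .
qed

lemma card_T3_sum:
  assumes fin: "finite V"
  shows "real (card {(x,y,z). x\<in>V \<and> y\<in>V \<and> z\<in>V \<and> Q x y z}) = (\<Sum>x\<in>V. \<Sum>y\<in>V. \<Sum>z\<in>V. if Q x y z then 1 else 0)"
proof -
  have e: "{(x,y,z). x\<in>V \<and> y\<in>V \<and> z\<in>V \<and> Q x y z} = {t \<in> V \<times> V \<times> V. Q (fst t) (fst (snd t)) (snd (snd t))}"
    by auto
  have "real (card {t \<in> V \<times> V \<times> V. Q (fst t) (fst (snd t)) (snd (snd t))})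
      = (\<Sum>t\<in>{t \<in> V \<times> V \<times> V. Q (fst t) (fst (snd t)) (snd (snd t))}. 1)" by simp
  also have "\<dots> = (\<Sum>t\<in>V \<times> V \<times> V. if Q (fst t) (fst (snd t)) (snd (snd t)) then 1 else 0)"
    using fin by (subst sum.inter_filter) auto
  also have "\<dots> = (\<Sum>x\<in>V. \<Sum>y\<in>V. \<Sum>z\<in>V. if Q x y z then 1 else 0)"
    by (simp add: sum.cartesian_product')
  finally show ?thesis unfolding e .
qed

lemma card_T2_sum:
  assumes fin: "finite V"
  shows "real (card {(x,y). x\<in>V \<and> y\<in>V \<and> Q x y}) = (\<Sum>x\<in>V. \<Sum>y\<in>V. if Q x y then 1 else 0)"
proof -
  have e: "{(x,y). x\<in>V \<and> y\<in>V \<and> Q x y} = {t \<in> V \<times> V. Q (fst t) (snd t)}"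
    by auto
  have "real (card {t \<in> V \<times> V. Q (fst t) (snd t)})
      = (\<Sum>t\<in>{t \<in> V \<times> V. Q (fst t) (snd t)}. 1)" by simp
  also have "\<dots> = (\<Sum>t\<in>V \<times> V. if Q (fst t) (snd t) then 1 else 0)"
    using fin by (subst sum.inter_filter) auto
  also have "\<dots> = (\<Sum>x\<in>V. \<Sum>y\<in>V. if Q x y then 1 else 0)"
    by (simp add: sum.cartesian_product')
  finally show ?thesis unfolding e .
qed

lemma count3:
  assumes fin: "finite V"
    and W: "\<And>x y z. x\<in>V \<Longrightarrow> y\<in>V \<Longrightarrow> z\<in>V \<Longrightarrow> (if x\<noteq>y \<and> x\<noteq>z \<and> y\<noteq>z \<and> P {x,y,z} then 1 else 0) = W x y z"
  shows "6 * real (card {S. S \<subseteq> V \<and> card S = 3 \<and> P S}) = (\<Sum>x\<in>V. \<Sum>y\<in>V. \<Sum>z\<in>V. W x y z)"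
proof -
  have "6 * real (card {S. S \<subseteq> V \<and> card S = 3 \<and> P S})
     = real (card {(x,y,z). x\<in>V \<and> y\<in>V \<and> z\<in>V \<and> x\<noteq>y \<and> x\<noteq>z \<and> y\<noteq>z \<and> P {x,y,z}})"
    unfolding card_triples[OF fin] by simp
  also have "\<dots> = (\<Sum>x\<in>V. \<Sum>y\<in>V. \<Sum>z\<in>V. if x\<noteq>y \<and> x\<noteq>z \<and> y\<noteq>z \<and> P {x,y,z} then 1 else 0)"
    by (rule card_T3_sum[OF fin])
  also have "\<dots> = (\<Sum>x\<in>V. \<Sum>y\<in>V. \<Sum>z\<in>V. W x y z)"
    by (intro sum.cong refl) (simp add: W)
  finally show ?thesis .
qed

lemma count2:
  assumes fin: "finite V"
    and W: "\<And>x y. x\<in>V \<Longrightarrow> y\<in>V \<Longrightarrow> (if x\<noteq>y \<and> P {x,y} then 1 else 0) = W x y"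
  shows "2 * real (card {S. S \<subseteq> V \<and> card S = 2 \<and> P S}) = (\<Sum>x\<in>V. \<Sum>y\<in>V. W x y)"
proof -
  have "2 * real (card {S. S \<subseteq> V \<and> card S = 2 \<and> P S})
     = real (card {(x,y). x\<in>V \<and> y\<in>V \<and> x\<noteq>y \<and> P {x,y}})"
    unfolding card_pairs[OF fin] by simp
  also have "\<dots> = (\<Sum>x\<in>V. \<Sum>y\<in>V. if x\<noteq>y \<and> P {x,y} then 1 else 0)"
    by (rule card_T2_sum[OF fin])
  also have "\<dots> = (\<Sum>x\<in>V. \<Sum>y\<in>V. W x y)"
    by (intro sum.cong refl) (simp add: W)
  finally show ?thesis .
qed

definition ab :: "bool \<Rightarrow> 'a graph \<Rightarrow> 'a \<Rightarrow> 'a \<Rightarrow> real" where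
  "ab b = (if b then aa else bb)"

lemma ab_simps[simp]: "ab True = aa" "ab False = bb" by (simp_all add: ab_def)

definition cnt :: "'b graph \<Rightarrow> 'a graph \<Rightarrow> nat" where
  "cnt F X = card {S. S \<subseteq> verts X \<and> card S = card (verts F) \<and> induced_iso X S F}"

lemma counts:
  assumes X: "simple_graph X"
  shows "6 * real (cnt K3 X) = S3 (ab True X) (ab True X) (ab True X) (verts X)"
    and "6 * real (cnt coK3 X) = S3 (ab False X) (ab False X) (ab False X) (verts X)"
    and "6 * real (cnt P3 X) = S3 (ab True X) (ab True X) (ab False X) (verts X)
          + S3 (ab True X) (ab False X) (ab True X) (verts X) + S3 (ab False X) (ab True X) (ab True X) (verts X)"
    and "6 * real (cnt K2_K1 X) = S3 (ab False X) (ab False X) (ab True X) (verts X)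
          + S3 (ab False X) (ab True X) (ab False X) (verts X) + S3 (ab True X) (ab False X) (ab False X) (verts X)"
    and "2 * real (cnt K2 X) = S2 (ab True X) (verts X)"
proof -
  have fin: "finite (verts X)" using X by (simp add: simple_graph_def)
  have c3: "card (verts K3) = 3" "card (verts coK3) = 3" "card (verts P3) = 3" "card (verts K2_K1) = 3"
    "card (verts K2) = 2" by (simp_all add: vK3 vcoK3 vP3 vK2K1 vK2)
  show "6 * real (cnt K3 X) = S3 (ab True X) (ab True X) (ab True X) (verts X)"
    unfolding cnt_def c3 S3_def using count3[OF fin ind_K3[OF X]] by (simp add:)
  show "6 * real (cnt coK3 X) = S3 (ab False X) (ab False X) (ab False X) (verts X)"
    unfolding cnt_def c3 S3_def using count3[OF fin ind_coK3[OF X]] by (simp add:)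
  show "6 * real (cnt P3 X) = S3 (ab True X) (ab True X) (ab False X) (verts X)
          + S3 (ab True X) (ab False X) (ab True X) (verts X) + S3 (ab False X) (ab True X) (ab True X) (verts X)"
    unfolding cnt_def c3 S3_def using count3[OF fin ind_P3[OF X]] by (simp add: sum.distrib)
  show "6 * real (cnt K2_K1 X) = S3 (ab False X) (ab False X) (ab True X) (verts X)
          + S3 (ab False X) (ab True X) (ab False X) (verts X) + S3 (ab True X) (ab False X) (ab False X) (verts X)"
    unfolding cnt_def c3 S3_def using count3[OF fin ind_K2K1[OF X]] by (simp add: sum.distrib)
  show "2 * real (cnt K2 X) = S2 (ab True X) (verts X)"
    unfolding cnt_def c3 S2_def using count2[OF fin ind_K2[OF X]] by simp
qed

lemma ab_inflate:
  assumes G: "simple_graph G" and H: "simple_graph H"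
    and "g \<in> verts G" "g' \<in> verts G" "h \<in> verts H" "h' \<in> verts H"
  shows "ab b (inflate G H) (g,h) (g',h') = ab b G g g' + (if g = g' then 1 else 0) * ab b H h h'"
  using assms by (cases b) (simp_all add: aa_inflate bb_inflate)

lemma ab_irrefl: "simple_graph G \<Longrightarrow> ab b G x x = 0"
  by (cases b) (simp_all add: aa_irrefl bb_irrefl)

lemma ab_mul: "ab b G x y * ab c G x y = (if b = c then ab b G x y else 0)"
  "ab b G x y * ab c G y x = (if b = c then ab b G x y else 0)"
  by (cases b; cases c; simp add: aa_def bb_def adj_sym[of G y x])+

lemma mix1: "(\<Sum>g\<in>V. \<Sum>g'\<in>V. ab b G g g' * ab c G g g') = (if b = c then S2 (ab b G) V else 0)"
  by (simp add: ab_mul S2_def)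
lemma mix2: "(\<Sum>g\<in>V. \<Sum>g'\<in>V. ab b G g g' * ab c G g' g) = (if b = c then S2 (ab b G) V else 0)"
  by (simp add: ab_mul S2_def)

lemma S3_graph:
  assumes G: "simple_graph G" and H: "simple_graph H"
  shows "S3 (ab b1 (inflate G H)) (ab b2 (inflate G H)) (ab b3 (inflate G H)) (verts (inflate G H))
    = real (card (verts H))^3 * S3 (ab b1 G) (ab b2 G) (ab b3 G) (verts G)
      + real (card (verts H)) * S2 (ab b1 H) (verts H) * (if b2 = b3 then S2 (ab b2 G) (verts G) else 0)
      + real (card (verts H)) * S2 (ab b2 H) (verts H) * (if b1 = b3 then S2 (ab b1 G) (verts G) else 0)
      + real (card (verts H)) * S2 (ab b3 H) (verts H) * (if b1 = b2 then S2 (ab b1 G) (verts G) else 0)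
      + real (card (verts G)) * S3 (ab b1 H) (ab b2 H) (ab b3 H) (verts H)"
  unfolding verts_inflate
  apply (subst S3_infl[where AA="ab b1 G" and AB="ab b2 G" and AC="ab b3 G" and BA="ab b1 H" and BB="ab b2 H" and BC="ab b3 H"])
  using G H by (simp_all add: simple_graph_def ab_irrefl ab_inflate mix1 mix2)

lemma S2_graph:
  assumes G: "simple_graph G" and H: "simple_graph H"
  shows "S2 (ab b (inflate G H)) (verts (inflate G H))
    = real (card (verts H))^2 * S2 (ab b G) (verts G) + real (card (verts G)) * S2 (ab b H) (verts H)"
  unfolding verts_inflate
  apply (subst S2_infl[where A="ab b G" and B="ab b H"])
  using G H by (simp_all add: simple_graph_def ab_inflate)

lemma S2_bb:
  assumes G: "simple_graph G"
  shows "S2 (ab False G) (verts G) = real (card (verts G)) * (real (card (verts G)) - 1) - S2 (ab True G) (verts G)"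
proof -
  let ?V = "verts G"
  have fin: "finite ?V" using G by (simp add: simple_graph_def)
  have pw: "bb G x y = 1 - (if x = y then 1 else 0) - aa G x y" for x y
    using sg_irrefl[OF G] by (auto simp: aa_def bb_def)
  have row: "(\<Sum>y\<in>?V. bb G x y) = real (card ?V) - 1 - (\<Sum>y\<in>?V. aa G x y)" if "x \<in> ?V" for x
  proof -
    have "(\<Sum>y\<in>?V. bb G x y) = (\<Sum>y\<in>?V. 1) - (\<Sum>y\<in>?V. (if x = y then 1 else 0)) - (\<Sum>y\<in>?V. aa G x y)"
      unfolding pw by (simp add: sum_subtractf)
    also have "(\<Sum>y\<in>?V. (if x = y then 1 else (0::real))) = 1" using fin that by simp
    finally show ?thesis by simp
  qed
  have "S2 (ab False G) ?V = (\<Sum>x\<in>?V. real (card ?V) - 1 - (\<Sum>y\<in>?V. aa G x y))"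
    unfolding S2_def ab_simps by (intro sum.cong refl) (simp add: row)
  also have "\<dots> = real (card ?V) * (real (card ?V) - 1) - S2 (ab True G) ?V"
    by (simp add: sum_subtractf sum.distrib S2_def algebra_simps)
  finally show ?thesis .
qed

lemma real_choose2: "real (n choose 2) = real n * (real n - 1) / 2"
proof -
  have ev: "even (n * (n - 1))" by (cases n) auto
  have "real (n choose 2) = real (n * (n - 1)) / 2"
    unfolding choose_two using ev by (simp add: real_of_nat_div)
  then show ?thesis by (cases n) (auto simp: algebra_simps)
qed

lemma div_half: "(b::real) \<noteq> 0 \<Longrightarrow> a / b = 1/2 \<Longrightarrow> 2 * a = b"
  by (simp add: field_simps)

lemma dens: "density F X = real (cnt F X) / real (card (verts X) choose card (verts F))"
  by (simp add: density_def cnt_def)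

lemma a3s_facts:
  assumes X: "simple_graph X" and A: "almost_3_symmetric X"
  shows "S2 (ab True X) (verts X) = real (card (verts X)) * (real (card (verts X)) - 1) / 2"
    and "S2 (ab False X) (verts X) = real (card (verts X)) * (real (card (verts X)) - 1) / 2"
    and "S3 (ab True X) (ab True X) (ab True X) (verts X) = S3 (ab False X) (ab False X) (ab False X) (verts X)"
    and "S3 (ab True X) (ab True X) (ab False X) (verts X)
          + S3 (ab True X) (ab False X) (ab True X) (verts X) + S3 (ab False X) (ab True X) (ab True X) (verts X)
        = S3 (ab False X) (ab False X) (ab True X) (verts X)
          + S3 (ab False X) (ab True X) (ab False X) (verts X) + S3 (ab True X) (ab False X) (ab False X) (verts X)"
proof -
  let ?n = "card (verts X)"
  have n3: "?n \<ge> 3" and d2: "density K2 X = 1/2" and d3: "density K3 X = density coK3 X"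
    and dp: "density P3 X = density K2_K1 X" using A by (auto simp: almost_3_symmetric_def)
  have c3: "card (verts K3) = 3" "card (verts coK3) = 3" "card (verts P3) = 3" "card (verts K2_K1) = 3"
    "card (verts K2) = 2" by (simp_all add: vK3 vcoK3 vP3 vK2K1 vK2)
  have nz3: "real (?n choose 3) \<noteq> 0" using n3 by simp
  have nn: "real ?n * (real ?n - 1) \<noteq> 0" using n3 by auto
  from d2 have "real (cnt K2 X) / (real ?n * (real ?n - 1) / 2) = 1/2"
    unfolding dens c3(5) real_choose2 .
  then have "2 * real (cnt K2 X) = real ?n * (real ?n - 1) / 2"
    using nn by (intro div_half) auto
  then show e1: "S2 (ab True X) (verts X) = real ?n * (real ?n - 1) / 2"
    using counts(5)[OF X] by simp
  show "S2 (ab False X) (verts X) = real ?n * (real ?n - 1) / 2"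
    using S2_bb[OF X] e1 by simp
  from d3 have "real (cnt K3 X) = real (cnt coK3 X)" using nz3 by (simp add: dens c3)
  then show "S3 (ab True X) (ab True X) (ab True X) (verts X) = S3 (ab False X) (ab False X) (ab False X) (verts X)"
    using counts(1,2)[OF X] by simp
  from dp have "real (cnt P3 X) = real (cnt K2_K1 X)" using nz3 by (simp add: dens c3)
  then show "S3 (ab True X) (ab True X) (ab False X) (verts X)
          + S3 (ab True X) (ab False X) (ab True X) (verts X) + S3 (ab False X) (ab True X) (ab True X) (verts X)
        = S3 (ab False X) (ab False X) (ab True X) (verts X)
          + S3 (ab False X) (ab True X) (ab False X) (verts X) + S3 (ab True X) (ab False X) (ab False X) (verts X)"
    using counts(3,4)[OF X] by simp
qed

theorem mainTheorem17:
  fixes G :: "'a graph" and H :: "'b graph"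
  assumes "simple_graph G" and "simple_graph H"
    and "card (verts G) \<ge> 3" and "card (verts H) \<ge> 3"
    and "almost_3_symmetric G" and "almost_3_symmetric H"
  shows "almost_3_symmetric (inflate G H)"
proof -
  note G = assms(1) and H = assms(2)
  let ?P = "inflate G H"
  let ?n = "real (card (verts G))" and ?m = "real (card (verts H))"
  have sP: "simple_graph ?P" by (rule simple_inflate[OF G H])
  have cP: "card (verts ?P) = card (verts G) * card (verts H)" by (simp add: verts_inflate card_cartesian_product)
  have N9: "card (verts ?P) \<ge> 9" unfolding cP using assms(3,4) mult_le_mono by fastforce
  have c3: "card (verts K3) = 3" "card (verts coK3) = 3" "card (verts P3) = 3" "card (verts K2_K1) = 3"
    "card (verts K2) = 2" by (simp_all add: vK3 vcoK3 vP3 vK2K1 vK2)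
  note fG = a3s_facts[OF G assms(5)] and fH = a3s_facts[OF H assms(6)]
  note S3G = S3_graph[OF G H] and S2G = S2_graph[OF G H]
  have "2 * real (cnt K2 ?P) = S2 (ab True ?P) (verts ?P)" by (rule counts(5)[OF sP])
  also have "\<dots> = ?m^2 * S2 (ab True G) (verts G) + ?n * S2 (ab True H) (verts H)" by (rule S2G)
  also have "\<dots> = ?m^2 * (?n * (?n - 1) / 2) + ?n * (?m * (?m - 1) / 2)" by (simp only: fG(1) fH(1))
  finally have e2: "2 * real (cnt K2 ?P) = ?m^2 * (?n * (?n - 1) / 2) + ?n * (?m * (?m - 1) / 2)" .
  have nm: "?n * ?m \<ge> 9" using mult_mono[of 3 ?n 3 ?m] assms(3,4) by simp
  have nn: "?n * ?m * (?n * ?m - 1) \<noteq> 0" using nm assms(3,4) by auto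
  have d2: "density K2 ?P = 1/2"
    unfolding dens c3 real_choose2 cP of_nat_mult
    using e2 nn by (simp add: field_simps) (simp add: algebra_simps power2_eq_square)
  have t: "6 * real (cnt K3 ?P) = 6 * real (cnt coK3 ?P)"
    unfolding counts(1,2)[OF sP] S3G by (simp only: fG(1,2,3) fH(1,2,3) simp_thms if_True)
  have d3: "density K3 ?P = density coK3 ?P"
    using t by (simp add: dens c3)
    have a: "?m^3 * (S3 (ab True G) (ab True G) (ab False G) (verts G)
        + S3 (ab True G) (ab False G) (ab True G) (verts G) + S3 (ab False G) (ab True G) (ab True G) (verts G))
      = ?m^3 * (S3 (ab False G) (ab False G) (ab True G) (verts G)
        + S3 (ab False G) (ab True G) (ab False G) (verts G) + S3 (ab True G) (ab False G) (ab False G) (verts G))"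
    using fG(4) by simp
  have b: "?n * (S3 (ab True H) (ab True H) (ab False H) (verts H)
        + S3 (ab True H) (ab False H) (ab True H) (verts H) + S3 (ab False H) (ab True H) (ab True H) (verts H))
      = ?n * (S3 (ab False H) (ab False H) (ab True H) (verts H)
        + S3 (ab False H) (ab True H) (ab False H) (verts H) + S3 (ab True H) (ab False H) (ab False H) (verts H))"
    using fH(4) by simp
  have p: "6 * real (cnt P3 ?P) = 6 * real (cnt K2_K1 ?P)"
    unfolding counts(3,4)[OF sP] S3G using a b
    by (simp only: fG(1,2) fH(1,2) simp_thms if_True if_False distrib_left)
  have dp: "density P3 ?P = density K2_K1 ?P"
    using p by (simp add: dens c3)
  show ?thesis unfolding almost_3_symmetric_def using N9 d2 d3 dp by simp
qed

end
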